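(* Let $G$ and $K$ be countable sets, let $m\in\mathbb N^+$, let $T\in\Lambda^G_m$ be an $m$-parent transmission function over $G$, and let $\beta:G\rightarrow K$ be a surjective function such that $T$ is ambivalent under $\beta$, with theme transmission function $T^{\overrightarrow\beta}\in\Lambda^K_m$. Then for every $p\in\Lambda^G$, \[\Xi_\beta(\mathcal V_T p)=\mathcal V_{T^{\overrightarrow\beta}}(\Xi_\beta p),\] i.e. $\mathcal V_T$ is globally coarsenable under $\beta$ with quotient $\mathcal V_{T^{\overrightarrow\beta}}$.
   Context: For a set $X$, $\Lambda^X$ denotes the set of distributions over $X$, i.e. functions $p:X\rightarrow[0,1]$ with $\sum_{x\in X}p(x)=1$. For $m\in\mathbb N^+$, an $m$-parent transmission function over $X$ is a function $T:\prod_1^{m+1}X\rightarrow[0,1]$, written $T(x|x_1,\ldots,x_m)$, such that for all $x_1,\ldots,x_m\in X$, $\sum_{x\in X}T(x|x_1,\ldots,x_m)=1$; the set of these is $\Lambda^X_m$. For $T\in\Lambda^X_m$ ($X$ countable), the variation operator $\mathcal V_T:\Lambda^X\rightarrow\Lambda^X$ is $(\mathcal V_Tp)(x)=\sum_{(x_1,\ldots,x_m)\in\prod_1^m X}T(x|x_1,\ldots,x_m)\prod_{i=1}^m p(x_i)$. For a function $\beta:X\rightarrow Y$ and $y\in Y$, $\langle y\rangle_\beta=\{x\in X\mid\beta(x)=y\}$. The projection operator $\Xi_\beta:\Lambda^X\rightarrow\Lambda^Y$ is $(\Xi_\beta p)(y)=\sum_{x\in\langle y\rangle_\beta}p(x)$.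 A transmission function $T\in\Lambda^G_m$ is ambivalent under a surjection $\beta:G\rightarrow K$ if there exists $D\in\Lambda^K_m$ such that for all $k,k_1,\ldots,k_m\in K$ and all $x_1\in\langle k_1\rangle_\beta,\ldots,x_m\in\langle k_m\rangle_\beta$, $\sum_{x\in\langle k\rangle_\beta}T(x|x_1,\ldots,x_m)=D(k|k_1,\ldots,k_m)$; this (unique) $D$ is denoted $T^{\overrightarrow\beta}$. *)

theory Defs
  imports "HOL-Analysis.Analysis"
begin

definition distribution :: "('a \<Rightarrow> real) \<Rightarrow> bool" where
  "distribution p \<longleftrightarrow> (\<forall>x. 0 \<le> p x \<and> p x \<le> 1) \<and> (p has_sum 1) UNIV"

text \<open>m-parent transmission functions; T x xs stands for T(x | x_1,...,x_m),
  where the parent tuple is the list xs of length m.\<close>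
definition transmission_fun :: "nat \<Rightarrow> ('a \<Rightarrow> 'a list \<Rightarrow> real) \<Rightarrow> bool" where
  "transmission_fun m T \<longleftrightarrow> (\<forall>xs. length xs = m \<longrightarrow> distribution (\<lambda>x. T x xs))"

definition variation :: "nat \<Rightarrow> ('a \<Rightarrow> 'a list \<Rightarrow> real) \<Rightarrow> ('a \<Rightarrow> real) \<Rightarrow> 'a \<Rightarrow> real" where
  "variation m T p x = (\<Sum>\<^sub>\<infinity>xs\<in>{xs. length xs = m}. T x xs * prod_list (map p xs))"

definition projection :: "('a \<Rightarrow> 'b) \<Rightarrow> ('a \<Rightarrow> real) \<Rightarrow> 'b \<Rightarrow> real" where
  "projection \<beta> p y = (\<Sum>\<^sub>\<infinity>x\<in>{x. \<beta> x = y}. p x)"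

definition ambivalence_witness ::
  "nat \<Rightarrow> ('a \<Rightarrow> 'a list \<Rightarrow> real) \<Rightarrow> ('a \<Rightarrow> 'b) \<Rightarrow> ('b \<Rightarrow> 'b list \<Rightarrow> real) \<Rightarrow> bool" where
  "ambivalence_witness m T \<beta> D \<longleftrightarrow> transmission_fun m D \<and>
     (\<forall>k ks xs. length ks = m \<and> length xs = m \<and> map \<beta> xs = ks \<longrightarrow>
        (\<Sum>\<^sub>\<infinity>x\<in>{x. \<beta> x = k}. T x xs) = D k ks)"

definition ambivalent :: "nat \<Rightarrow> ('a \<Rightarrow> 'a list \<Rightarrow> real) \<Rightarrow> ('a \<Rightarrow> 'b) \<Rightarrow> bool" where
  "ambivalent m T \<beta> \<longleftrightarrow> (\<exists>D. ambivalence_witness m T \<beta> D)"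

text \<open>The theme transmission function T^{->beta} (unique on length-m parent lists).\<close>
definition theme_tf ::
  "nat \<Rightarrow> ('a \<Rightarrow> 'a list \<Rightarrow> real) \<Rightarrow> ('a \<Rightarrow> 'b) \<Rightarrow> ('b \<Rightarrow> 'b list \<Rightarrow> real)" where
  "theme_tf m T \<beta> = (SOME D. ambivalence_witness m T \<beta> D)"

end

theory Submission imports Defs begin

lemma prod_list_map_nonneg:
  fixes p :: "'a \<Rightarrow> real"
  shows "(\<And>x. p x \<ge> 0) \<Longrightarrow> prod_list (map p xs) \<ge> 0"
  by (induction xs) auto

lemma nn_fubini:
  fixes f :: "'a \<times> 'b \<Rightarrow> real"
  assumes "\<And>x y. x \<in> A \<Longrightarrow> y \<in> B x \<Longrightarrow> f (x,y) \<ge> 0"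
    and "\<And>x. x \<in> A \<Longrightarrow> ((\<lambda>y. f (x,y)) has_sum g x) (B x)"
    and "(g has_sum S) A"
  shows "(f has_sum S) (Sigma A B)"
  apply (rule has_sum_SigmaI[OF assms(2,3)])
   apply assumption
  apply (rule summable_on_SigmaI[OF assms(2)])
  using assms(3) has_sum_imp_summable apply blast+
  using assms(1) by blast

lemma nn_product:
  fixes f :: "'a \<Rightarrow> real" and g :: "'b \<Rightarrow> real"
  assumes "(f has_sum a) A" "(g has_sum b) B"
    "\<And>x. x \<in> A \<Longrightarrow> f x \<ge> 0" "\<And>y. y \<in> B \<Longrightarrow> g y \<ge> 0"
  shows "((\<lambda>(x,y). f x * g y) has_sum (a * b)) (A \<times> B)"
proof -
  have "((\<lambda>z. f (fst z) * g (snd z)) has_sum (a * b)) (Sigma A (\<lambda>_. B))"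
  proof (rule nn_fubini[where g = "\<lambda>x. f x * b"])
    show "((\<lambda>x. f x * b) has_sum a * b) A" using has_sum_cmult_left[OF assms(1)] .
  next
    fix x assume "x \<in> A"
    show "((\<lambda>y. f (fst (x, y)) * g (snd (x, y))) has_sum f x * b) B"
      using has_sum_cmult_right[OF assms(2), of "f x"] by simp
  qed (use assms in auto)
  then show ?thesis by (simp add: case_prod_unfold)
qed

lemma prod_has_sum:
  fixes p :: "'a \<Rightarrow> real" and \<beta> :: "'a \<Rightarrow> 'b"
  assumes nn: "\<And>x. p x \<ge> 0" and sm: "p summable_on UNIV"
  shows "((\<lambda>xs. prod_list (map p xs)) has_sum
           prod_list (map (\<lambda>k. infsum p {x. \<beta> x = k}) ks)) {xs. map \<beta> xs = ks}"
proof (induction ks)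
  case Nil
  have "{xs. map \<beta> xs = []} = {[]}" by auto
  then show ?case using has_sum_finite[of "{[]}" "\<lambda>xs. prod_list (map p xs)"] by simp
next
  case (Cons k ks)
  have hk: "(p has_sum infsum p {x. \<beta> x = k}) {x. \<beta> x = k}"
    using summable_on_subset[OF sm] by (simp add: has_sum_infsum)
  have pr: "((\<lambda>(x,xs). p x * prod_list (map p xs)) has_sum
     (infsum p {x. \<beta> x = k} * prod_list (map (\<lambda>k. infsum p {x. \<beta> x = k}) ks)))
     ({x. \<beta> x = k} \<times> {xs. map \<beta> xs = ks})"
    by (rule nn_product[OF hk Cons]) (auto simp: nn intro: prod_list_map_nonneg)
  have "((\<lambda>(x,xs). p x * prod_list (map p xs)) has_sum
     (infsum p {x. \<beta> x = k} * prod_list (map (\<lambda>k. infsum p {x. \<beta> x = k}) ks)))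
     ({x. \<beta> x = k} \<times> {xs. map \<beta> xs = ks}) =
     ((\<lambda>xs. prod_list (map p xs)) has_sum
     (infsum p {x. \<beta> x = k} * prod_list (map (\<lambda>k. infsum p {x. \<beta> x = k}) ks)))
     {xs. map \<beta> xs = k # ks}"
    by (rule has_sum_reindex_bij_witness[where i = "\<lambda>xs. (hd xs, tl xs)" and j = "\<lambda>(x,xs). x # xs"])
       auto
  with pr show ?case by simp
qed


theorem theorem1:
  fixes T :: "'g::countable \<Rightarrow> 'g list \<Rightarrow> real"
    and \<beta> :: "'g \<Rightarrow> 'k::countable"
    and m :: nat
    and p :: "'g \<Rightarrow> real"
  assumes "m \<ge> 1"
    and "transmission_fun m T"
    and "surj \<beta>"
    and "ambivalent m T \<beta>"
    and "distribution p"
  shows "projection \<beta> (variation m T p) = variation m (theme_tf m T \<beta>) (projection \<beta> p)"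
proof
  fix k
  define D where "D = theme_tf m T \<beta>"
  have W: "ambivalence_witness m T \<beta> D"
    unfolding D_def theme_tf_def using assms(4) unfolding ambivalent_def by (rule someI_ex)
  have Dd: "\<And>ks. length ks = m \<Longrightarrow> 0 \<le> D k ks \<and> D k ks \<le> 1"
    using W unfolding ambivalence_witness_def transmission_fun_def distribution_def by blast
  have DT: "\<And>xs. length xs = m \<Longrightarrow> (\<Sum>\<^sub>\<infinity>x\<in>{x. \<beta> x = k}. T x xs) = D k (map \<beta> xs)"
    using W unfolding ambivalence_witness_def by auto
  have Td: "\<And>xs x. length xs = m \<Longrightarrow> 0 \<le> T x xs \<and> T x xs \<le> 1"
    using assms(2) unfolding transmission_fun_def distribution_def by blast
  have Ts: "\<And>xs. length xs = m \<Longrightarrow> (\<lambda>x. T x xs) summable_on UNIV"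
    using assms(2) unfolding transmission_fun_def distribution_def
    using has_sum_imp_summable by blast
  have pn: "\<And>x. p x \<ge> 0" and ps: "(p has_sum 1) UNIV"
    using assms(5) unfolding distribution_def by auto
  have psm: "p summable_on UNIV" using ps has_sum_imp_summable by blast
  define L where "L = {xs::'g list. length xs = m}"
  define LK where "LK = {ks::'k list. length ks = m}"
  define q where "q = projection \<beta> p"
  define P where "P = (\<lambda>xs. prod_list (map p xs))"
  have Pn: "\<And>xs. P xs \<ge> 0" unfolding P_def by (rule prod_list_map_nonneg[OF pn])
  have PL: "(P has_sum 1) L"
  proof -
    have "(P has_sum prod_list (map (\<lambda>k. infsum p {x. (\<lambda>_. ()) x = k}) (replicate m ())))
        {xs. map (\<lambda>_. ()) xs = replicate m ()}"
      unfolding P_def by (rule prod_has_sum[OF pn psm])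
    moreover have "{xs. map (\<lambda>_. ()) xs = replicate m ()} = L"
      unfolding L_def by (auto simp: map_replicate_const)
    moreover have "infsum p UNIV = 1" using ps infsumI by blast
    ultimately show ?thesis by simp
  qed
  define A where "A = (\<lambda>xs. D k (map \<beta> xs) * P xs)"
  have As: "A summable_on L"
    apply (rule summable_on_comparison_test[OF has_sum_imp_summable[OF PL]])
    unfolding A_def L_def using Dd Pn
    by (auto intro: mult_left_le_one_le mult_nonneg_nonneg)
  define S where "S = infsum A L"
  have AS: "(A has_sum S) L" unfolding S_def using As by (rule has_sum_infsum)
  have RHS: "variation m D q k = S"
  proof -
    define F where "F = (\<lambda>ks::'k list. {xs. map \<beta> xs = ks})"
    have "((\<lambda>z. D k (fst z) * P (snd z)) has_sum S) (Sigma LK F)"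
    proof -
      have "((\<lambda>z. D k (fst z) * P (snd z)) has_sum S) (Sigma LK F) = (A has_sum S) L"
        by (rule has_sum_reindex_bij_witness[where j = "\<lambda>z. snd z" and i = "\<lambda>xs. (map \<beta> xs, xs)"])
           (auto simp: F_def LK_def L_def A_def)
      then show ?thesis using AS by simp
    qed
    then have "((\<lambda>ks. D k ks * prod_list (map q ks)) has_sum S) LK"
    proof (rule has_sum_SigmaD)
      fix ks assume "ks \<in> LK"
      show "((\<lambda>y. D k (fst (ks, y)) * P (snd (ks, y))) has_sum D k ks * prod_list (map q ks)) (F ks)"
        using has_sum_cmult_right[OF prod_has_sum[OF pn psm, of \<beta> ks], of "D k ks"]
        unfolding F_def P_def q_def projection_def by simp
    qed
    then show ?thesis unfolding variation_def LK_def using infsumI by blast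
  qed
  have LHS: "projection \<beta> (variation m T p) k = S"
  proof -
    have H: "((\<lambda>z. T (snd z) (fst z) * P (fst z)) has_sum S) (Sigma L (\<lambda>_. {x. \<beta> x = k}))"
    proof (rule nn_fubini[where g = A])
      fix xs assume xs: "xs \<in> L"
      have "((\<lambda>x. T x xs) has_sum (\<Sum>\<^sub>\<infinity>x\<in>{x. \<beta> x = k}. T x xs)) {x. \<beta> x = k}"
        using xs Ts summable_on_subset unfolding L_def by (blast intro: has_sum_infsum)
      then show "((\<lambda>y. T (snd (xs, y)) (fst (xs, y)) * P (fst (xs, y))) has_sum A xs) {x. \<beta> x = k}"
        using has_sum_cmult_left xs DT unfolding A_def L_def by fastforce
    qed (use AS Td Pn L_def in auto)
    then have H2: "((\<lambda>z. T (fst z) (snd z) * P (snd z)) has_sum S) ({x. \<beta> x = k} \<times> L)"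
      using has_sum_swap by (fastforce simp: case_prod_unfold)
    have "(variation m T p has_sum S) {x. \<beta> x = k}"
    proof (rule has_sum_SigmaD[OF H2])
      fix x assume x: "x \<in> {x. \<beta> x = k}"
      have "(\<lambda>xs. T x xs * P xs) summable_on L"
        using summable_on_SigmaD1[of "\<lambda>x xs. T x xs * P xs", OF _ x] H2 has_sum_imp_summable
        by (fastforce simp: case_prod_unfold)
      then show "((\<lambda>y. T (fst (x, y)) (snd (x, y)) * P (snd (x, y))) has_sum variation m T p x) L"
        unfolding variation_def L_def P_def by (simp add: has_sum_infsum)
    qed
    then show ?thesis unfolding projection_def using infsumI by blast
  qed
  show "projection \<beta> (variation m T p) k = variation m (theme_tf m T \<beta>) (projection \<beta> p) k"
    using LHS RHS unfolding D_def q_def by simp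
qed

end
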